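(* Let $\Theta=(\alpha,\rho_r,\rho_d,\rho_s,\rho_0,T)$ with $\alpha>1$, $\rho_r,\rho_d,\rho_s,\rho_0>0$, $T>1$, and $K_{max}(\Theta):=\min\big(\frac T4,\frac{\rho_r}{3\rho_0},\frac{3\rho_d}{2\rho_0}\big)>10$. Let $0<R_1<R_2<R_{max}(\Theta)$ be such that $\rho_r<\frac{\alpha}{(1+\rho_d/\rho_r)^2}\frac{g^2(R_i)}{R_i}$ for $i=1,2$. Then $\zeta'_{csi}(R_1,\Theta)<\zeta'_{csi}(R_2,\Theta)$.
   Context: $g(x)=\sqrt{\frac{x}{2^x-1}}\big(2^x x\ln2-2^x+1\big)$, $x>0$. $R_{max}(\Theta)=c(\Theta)K_{max}(\Theta)$ where $c(\Theta)>0$ is the unique positive solution of $g(c)/\sqrt c=(1+\rho_d/\rho_r)\sqrt{K_{max}(\Theta)\rho_r/\alpha}$. For $R>0$ and real $M>K\ge1$, $\frac{1}{\zeta_{csi}(M,K,R,\Theta)}=\frac1R\big[\frac{\alpha K}{M-K}(2^{R/K}-1)+M\rho_r+K\rho_d+\rho_s\big]$, and $\zeta'_{csi}(R,\Theta)$ is the maximum of $\zeta_{csi}(M,K,R,\Theta)$ over real $(M,K)$ with $1\le K\le K_{max}(\Theta)$, $M>K$. *)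

theory Defs
  imports Complex_Main
begin

definition g :: "real \<Rightarrow> real" where
  "g x = sqrt (x / (2 powr x - 1)) * (2 powr x * x * ln 2 - 2 powr x + 1)"

definition Kmax :: "real \<Rightarrow> real \<Rightarrow> real \<Rightarrow> real \<Rightarrow> real" where
  "Kmax rho_r rho_d rho_0 T = min (T / 4) (min (rho_r / (3 * rho_0)) (3 * rho_d / (2 * rho_0)))"

definition cTheta :: "real \<Rightarrow> real \<Rightarrow> real \<Rightarrow> real \<Rightarrow> real \<Rightarrow> real" where
  "cTheta alpha rho_r rho_d rho_0 T =
     (THE c. c > 0 \<and> g c / sqrt c =
        (1 + rho_d / rho_r) * sqrt (Kmax rho_r rho_d rho_0 T * rho_r / alpha))"

definition Rmax :: "real \<Rightarrow> real \<Rightarrow> real \<Rightarrow> real \<Rightarrow> real \<Rightarrow> real" where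
  "Rmax alpha rho_r rho_d rho_0 T =
     cTheta alpha rho_r rho_d rho_0 T * Kmax rho_r rho_d rho_0 T"

definition zeta_csi :: "real \<Rightarrow> real \<Rightarrow> real \<Rightarrow> real \<Rightarrow> real \<Rightarrow> real \<Rightarrow> real \<Rightarrow> real" where
  "zeta_csi M K R alpha rho_r rho_d rho_s =
     1 / ((1 / R) * (alpha * K / (M - K) * (2 powr (R / K) - 1) + M * rho_r + K * rho_d + rho_s))"

definition zeta'_csi :: "real \<Rightarrow> real \<Rightarrow> real \<Rightarrow> real \<Rightarrow> real \<Rightarrow> real \<Rightarrow> real \<Rightarrow> real" where
  "zeta'_csi R alpha rho_r rho_d rho_s rho_0 T =
     (SUP MK \<in> {(M, K). 1 \<le> K \<and> K \<le> Kmax rho_r rho_d rho_0 T \<and> M > K}.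
        zeta_csi (fst MK) (snd MK) R alpha rho_r rho_d rho_s)"

end

theory Submission
  imports Defs
begin

definition ps :: "real \<Rightarrow> real" where
  "ps u = ((u - 1) * exp u + 1) / sqrt (exp u - 1)"

lemma ps_deriv:
  assumes "u > 0"
  shows "(ps has_real_derivative (exp u * ((u+1)*exp u - 2*u - 1) / (2*(exp u - 1)*sqrt(exp u - 1)))) (at u)"
proof -
  have e: "exp u > 1" using assms by simp
  have s: "sqrt (exp u - 1) > 0" using e by simp
  have d1: "((\<lambda>u. (u-1)*exp u + 1) has_real_derivative u*exp u) (at u)"
    by (auto intro!: derivative_eq_intros simp: algebra_simps)
  have d2: "((\<lambda>u. sqrt(exp u - 1)) has_real_derivative exp u / (2*sqrt(exp u -1))) (at u)"
    using e by (auto intro!: derivative_eq_intros simp: field_simps)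
  have "(ps has_real_derivative ((u * exp u) * sqrt (exp u - 1) - ((u - 1) * exp u + 1) * (exp u / (2 * sqrt (exp u - 1)))) / (sqrt (exp u - 1) * sqrt (exp u - 1))) (at u)"
    unfolding ps_def[abs_def] using DERIV_divide[OF d1 d2] s by simp
  moreover have "((u * exp u) * sqrt (exp u - 1) - ((u - 1) * exp u + 1) * (exp u / (2 * sqrt (exp u - 1)))) / (sqrt (exp u - 1) * sqrt (exp u - 1))
    = (exp u * ((u+1)*exp u - 2*u - 1) / (2*(exp u - 1)*sqrt(exp u - 1)))"
    using e s by (simp add: field_simps)
  ultimately show ?thesis by simp
qed

lemma ps_deriv_pos:
  assumes "u > 0"
  shows "exp u * ((u+1)*exp u - 2*u - 1) / (2*(exp u - 1)*sqrt(exp u - 1)) > 0"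
proof -
  have e: "exp u > 1" using assms by simp
  have "exp u \<ge> 1 + u" by (rule exp_ge_add_one_self)
  then have "(u+1)*exp u \<ge> (u+1)*(u+1)" using assms by (intro mult_left_mono) linarith+
  then have "(u+1)*exp u - 2*u - 1 > 0" using assms by (simp add: algebra_simps) (smt (verit) mult_pos_pos)
  then show ?thesis using e by (intro divide_pos_pos mult_pos_pos) auto
qed

lemma ps_mono:
  assumes "0 < a" "a < b"
  shows "ps a < ps b"
proof (rule DERIV_pos_imp_increasing[OF assms(2)])
  fix x assume "a \<le> x" "x \<le> b"
  then have "x > 0" using assms by linarith
  then show "\<exists>y. DERIV ps x :> y \<and> y > 0" using ps_deriv ps_deriv_pos by blast
qed

lemma ps_cont: "0 < a \<Longrightarrow> continuous_on {a..b} ps"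
  by (intro continuous_at_imp_continuous_on ballI DERIV_isCont[OF ps_deriv]) auto

lemma ps_small:
  assumes "0 < u" "u \<le> 1"
  shows "ps u \<le> 2 * u"
proof -
  have e: "exp u > 1" using assms by simp
  have s: "sqrt (exp u - 1) > 0" using e by simp
  have "exp u - 1 \<ge> u" using exp_ge_add_one_self[of u] by linarith
  then have N: "(u - 1) * exp u + 1 \<le> u * (exp u - 1)" by (simp add: algebra_simps)
  have "exp u \<le> exp 1" using assms by simp
  then have "exp u - 1 \<le> 4" using exp_le by linarith
  then have sq: "sqrt (exp u - 1) \<le> 2" using real_sqrt_le_mono[of "exp u - 1" 4] by simp
  have "ps u \<le> u * (exp u - 1) / sqrt (exp u - 1)"
    unfolding ps_def using N s by (intro divide_right_mono) auto
  also have "\<dots> = u * sqrt (exp u - 1)"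
    using e by (simp only: times_divide_eq_right[symmetric] real_div_sqrt)
  also have "\<dots> \<le> u * 2" using sq assms by (intro mult_left_mono) auto
  finally show ?thesis by simp
qed

lemma ps_large:
  assumes "1 \<le> u"
  shows "u - 1 \<le> ps u"
proof -
  have e: "exp u > 1" using assms by simp
  have s: "sqrt (exp u - 1) > 0" using e by simp
  have "sqrt (exp u - 1) \<le> sqrt (exp u)" by simp
  also have "sqrt (exp u) \<le> exp u"
  proof -
    have s1: "sqrt (exp u) \<ge> 1" using e by simp
    have "sqrt (exp u) * 1 \<le> sqrt (exp u) * sqrt (exp u)"
      using s1 by (intro mult_left_mono) auto
    then show ?thesis by simp
  qed
  finally have se: "sqrt (exp u - 1) \<le> exp u" .
  have "u - 1 = (u - 1) * exp u / exp u" by simp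
  also have "\<dots> \<le> (u - 1) * exp u / sqrt (exp u - 1)"
    using se s assms by (intro divide_left_mono) auto
  also have "\<dots> \<le> ps u" unfolding ps_def using s by (intro divide_right_mono) auto
  finally show ?thesis .
qed

lemma ps_exists:
  assumes "tau > 0"
  shows "\<exists>u>0. ps u = tau"
proof -
  define a where "a = min 1 (tau/4)"
  define b where "b = tau + 2"
  have a: "0 < a" "a \<le> 1" using assms by (auto simp: a_def)
  have "ps a \<le> 2 * a" using ps_small a by auto
  also have "\<dots> < tau" using assms by (auto simp: a_def)
  finally have pa: "ps a \<le> tau" by simp
  have "tau \<le> ps b" using ps_large[of b] assms by (auto simp: b_def)
  moreover have "a \<le> b" using a assms by (auto simp: b_def)
  ultimately obtain u where "a \<le> u" "u \<le> b" "ps u = tau"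
    using IVT'[of ps a tau b] pa ps_cont[of a b] a by auto
  then show ?thesis using a by (metis less_le_trans)
qed

lemma g_eq_ps:
  assumes "x > 0"
  shows "g x / sqrt x = ps (x * ln 2)"
proof -
  have p: "2 powr x = exp (x * ln 2)" by (simp add: powr_def)
  have e: "exp (x * ln 2) > 1" using assms by simp
  have s: "sqrt (exp (x * ln 2) - 1) > 0" using e by simp
  have sx: "sqrt x > 0" using assms by simp
  have "g x = sqrt x / sqrt (exp (x * ln 2) - 1) * (exp (x * ln 2) * x * ln 2 - exp (x * ln 2) + 1)"
    unfolding g_def p by (simp add: real_sqrt_divide)
  then have "g x / sqrt x = (exp (x * ln 2) * x * ln 2 - exp (x * ln 2) + 1) / sqrt (exp (x * ln 2) - 1)"
    using sx by simp
  also have "\<dots> = ps (x * ln 2)" unfolding ps_def by (simp add: algebra_simps)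
  finally show ?thesis .
qed

lemma cTheta_prop:
  assumes "alpha > 0" "rho_r > 0" "rho_d > 0" "Kmax rho_r rho_d rho_0 T > 0"
  shows "cTheta alpha rho_r rho_d rho_0 T > 0 \<and>
    ps (cTheta alpha rho_r rho_d rho_0 T * ln 2) = (1 + rho_d / rho_r) * sqrt (Kmax rho_r rho_d rho_0 T * rho_r / alpha)"
proof -
  define tau where "tau = (1 + rho_d / rho_r) * sqrt (Kmax rho_r rho_d rho_0 T * rho_r / alpha)"
  have "rho_d / rho_r > 0" using assms by simp
  then have t1: "1 + rho_d / rho_r > 0" by linarith
  have t2: "sqrt (Kmax rho_r rho_d rho_0 T * rho_r / alpha) > 0" using assms by simp
  have tau: "tau > 0" unfolding tau_def using t1 t2 by simp
  obtain u where u: "u > 0" "ps u = tau" using ps_exists[OF tau] by auto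
  have l2: "ln (2::real) > 0" by simp
  have ex: "\<exists>!c. c > 0 \<and> g c / sqrt c = tau"
  proof (rule ex1I[of _ "u / ln 2"])
    have q: "u / ln 2 > 0" using u l2 by simp
    have "u / ln 2 * ln 2 = u" using l2 by simp
    then show "u / ln 2 > 0 \<and> g (u / ln 2) / sqrt (u / ln 2) = tau"
      using g_eq_ps[OF q] q u by simp
  next
    fix c assume c: "c > 0 \<and> g c / sqrt c = tau"
    have c0: "c > 0" and c1: "g c / sqrt c = tau" using c by auto
    have pc: "ps (c * ln 2) = tau" using g_eq_ps[OF c0] c1 by (rule trans[OF sym])
    have "c * ln 2 = u"
    proof (rule ccontr)
      assume "c * ln 2 \<noteq> u"
      then consider (1) "c * ln 2 < u" | (2) "u < c * ln 2" by linarith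
      moreover have cl: "c * ln 2 > 0" using c l2 by simp
      ultimately show False
      proof cases
        case 1 then show False using ps_mono[of "c * ln 2" u] pc u cl by linarith
      next
        case 2 then show False using ps_mono[of u "c * ln 2"] pc u cl by linarith
      qed
    qed
    then show "c = u / ln 2" using l2 by (metis nonzero_mult_div_cancel_right less_irrefl)
  qed
  have "cTheta alpha rho_r rho_d rho_0 T > 0 \<and> g (cTheta alpha rho_r rho_d rho_0 T) / sqrt (cTheta alpha rho_r rho_d rho_0 T) = tau"
    unfolding cTheta_def tau_def[symmetric] by (rule theI'[OF ex])
  then have c0: "cTheta alpha rho_r rho_d rho_0 T > 0"
    and c1: "g (cTheta alpha rho_r rho_d rho_0 T) / sqrt (cTheta alpha rho_r rho_d rho_0 T) = tau" by blast+
  have "ps (cTheta alpha rho_r rho_d rho_0 T * ln 2) = tau" using g_eq_ps[OF c0] c1 by (rule trans[OF sym])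
  then show ?thesis using c0 unfolding tau_def by blast
qed


definition Hf :: "real \<Rightarrow> real \<Rightarrow> real \<Rightarrow> real \<Rightarrow> real \<Rightarrow> real \<Rightarrow> real" where
  "Hf a rr rd rs K R = R / (2 * sqrt (a * rr * K * (2 powr (R / K) - 1)) + K * (rr + rd) + rs)"

lemma Hf_exp: "Hf a rr rd rs K R = R / (2 * sqrt (a * rr * K * (exp (R / K * ln 2) - 1)) + K * (rr + rd) + rs)"
  by (simp add: Hf_def powr_def)

lemma amgm:
  fixes p q u :: real
  assumes "p \<ge> 0" "q > 0" "u > 0"
  shows "2 * sqrt (p * q) \<le> p / u + q * u"
proof -
  define s where "s = sqrt (p * q)"
  have s2: "s * s = p * q" using assms by (simp add: s_def)
  have "0 \<le> (s - q * u) * (s - q * u)" by simp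
  also have "\<dots> = s * s - 2 * s * (q * u) + (q * u) * (q * u)" by (simp add: algebra_simps)
  finally have h: "2 * s * (q * u) \<le> p * q + (q * u) * (q * u)" using s2 by linarith
  have qu: "q * u > 0" using assms by simp
  have "2 * s \<le> (p * q + (q * u) * (q * u)) / (q * u)" using h qu by (simp add: le_divide_eq)
  also have "\<dots> = p / u + q * u" using assms by (simp add: field_simps)
  finally show ?thesis by (simp add: s_def)
qed

lemma zeta_le_H:
  assumes "a > 0" "rr > 0" "rd > 0" "rs > 0" "K \<ge> 1" "M > K" "R > 0"
  shows "zeta_csi M K R a rr rd rs \<le> Hf a rr rd rs K R"
proof -
  define E where "E = 2 powr (R / K) - 1"
  have E: "E \<ge> 0" unfolding E_def using assms by (simp add: ge_one_powr_ge_zero)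
  define p where "p = a * K * E"
  define u where "u = M - K"
  have p: "p \<ge> 0" using E assms by (simp add: p_def)
  have u: "u > 0" using assms by (simp add: u_def)
  define D where "D = a * K / (M - K) * E + M * rr + K * rd + rs"
  define Dm where "Dm = 2 * sqrt (a * rr * K * E) + K * (rr + rd) + rs"
  have "a * rr * K * E = p * rr" by (simp add: p_def ac_simps)
  then have Dm: "Dm = 2 * sqrt (p * rr) + K * (rr + rd) + rs" by (simp add: Dm_def)
  have D: "D = p / u + rr * u + K * (rr + rd) + rs"
    by (simp add: D_def p_def u_def algebra_simps)
  have "Dm \<le> D" using amgm[OF p assms(2) u] Dm D by linarith
  moreover have Dm0: "Dm > 0"
  proof -
    have "sqrt (a * rr * K * E) \<ge> 0" using E assms by simp
    moreover have "K * (rr + rd) > 0" using assms by simp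
    ultimately show ?thesis using assms unfolding Dm_def by linarith
  qed
  ultimately have "R / D \<le> R / Dm" using assms by (intro divide_left_mono) auto
  moreover have "zeta_csi M K R a rr rd rs = R / D"
    unfolding zeta_csi_def D_def E_def using assms by simp
  moreover have "Hf a rr rd rs K R = R / Dm" unfolding Hf_def Dm_def E_def by simp
  ultimately show ?thesis by simp
qed

lemma zeta_eq_H:
  assumes "a > 0" "rr > 0" "rd > 0" "rs > 0" "K \<ge> 1" "R > 0"
  defines "M \<equiv> K + sqrt (a * K * (2 powr (R / K) - 1) / rr)"
  shows "M > K" "zeta_csi M K R a rr rd rs = Hf a rr rd rs K R"
proof -
  define E where "E = 2 powr (R / K) - 1"
  have "2 powr (R / K) > 1" using assms by (intro gr_one_powr) auto
  then have E: "E > 0" unfolding E_def by simp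
  define p where "p = a * K * E"
  have p: "p > 0" using E assms by (simp add: p_def)
  define u where "u = sqrt (p / rr)"
  have u: "u > 0" using p assms by (simp add: u_def)
  have Mu: "M = K + u" by (simp add: M_def u_def p_def E_def)
  then show "M > K" using u by simp
  have e1: "u * sqrt (p * rr) = p"
    using p assms by (simp add: u_def real_sqrt_mult[symmetric])
  have e2: "rr * u = sqrt (p * rr)"
  proof -
    have "sqrt (p * rr) = sqrt (rr^2 * (p / rr))" using assms by (simp add: power2_eq_square)
    also have "\<dots> = sqrt (rr^2) * sqrt (p / rr)" by (rule real_sqrt_mult)
    also have "\<dots> = rr * u" using assms by (simp add: u_def)
    finally show ?thesis by simp
  qed
  have pu: "p / u = sqrt (p * rr)" using e1 u by (simp add: field_simps)
  define D where "D = a * K / (M - K) * E + M * rr + K * rd + rs"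
  define Dm where "Dm = 2 * sqrt (a * rr * K * E) + K * (rr + rd) + rs"
  have "a * rr * K * E = p * rr" by (simp add: p_def ac_simps)
  then have Dm: "Dm = 2 * sqrt (p * rr) + K * (rr + rd) + rs" by (simp add: Dm_def)
  have D: "D = p / u + rr * u + K * (rr + rd) + rs"
    by (simp add: D_def p_def Mu algebra_simps)
  have DD: "D = Dm" using D Dm pu e2 by simp
  have "zeta_csi M K R a rr rd rs = R / D"
    unfolding zeta_csi_def D_def E_def using assms by simp
  moreover have "Hf a rr rd rs K R = R / Dm" unfolding Hf_def Dm_def E_def by simp
  ultimately show "zeta_csi M K R a rr rd rs = Hf a rr rd rs K R" using DD by simp
qed

lemma H_le_bound:
  assumes "a > 0" "rr > 0" "rd > 0" "rs > 0" "K \<ge> 1" "R > 0"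
  shows "Hf a rr rd rs K R \<le> R / rs"
proof -
  have "2 powr (R / K) \<ge> 1" using assms by (simp add: ge_one_powr_ge_zero)
  then have "sqrt (a * rr * K * (2 powr (R / K) - 1)) \<ge> 0" using assms by simp
  then have "rs \<le> 2 * sqrt (a * rr * K * (2 powr (R / K) - 1)) + K * (rr + rd) + rs"
    using assms by (simp add: add_nonneg_nonneg)
  then show ?thesis unfolding Hf_def using assms by (intro divide_left_mono) auto
qed

lemma H_scale:
  assumes "a > 0" "rr > 0" "rd > 0" "rs > 0" "K > 0" "R > 0" "s \<ge> 1"
  shows "Hf a rr rd rs K R \<le> Hf a rr rd rs (s * K) (s * R)"
    and "s > 1 \<Longrightarrow> Hf a rr rd rs K R < Hf a rr rd rs (s * K) (s * R)"
proof -
  define E where "E = 2 powr (R / K) - 1"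
  have "2 powr (R / K) \<ge> 1" using assms by (simp add: ge_one_powr_ge_zero)
  then have E: "E \<ge> 0" by (simp add: E_def)
  define X where "X = sqrt (a * rr * K * E)"
  have X: "X \<ge> 0" using E assms by (simp add: X_def)
  have sK: "s * R / (s * K) = R / K" using assms by simp
  have "sqrt (a * rr * (s * K) * E) = sqrt s * X"
    by (simp add: X_def real_sqrt_mult[symmetric] ac_simps)
  define c where "c = rr + rd"
  define D1 where "D1 = 2 * X + K * c + rs"
  define D2 where "D2 = 2 * (sqrt s * X) + s * K * c + rs"
  have H1: "Hf a rr rd rs K R = R / D1" by (simp add: Hf_def D1_def X_def E_def c_def)
  have H2: "Hf a rr rd rs (s * K) (s * R) = s * R / D2"
    unfolding Hf_def sK using \<open>sqrt (a * rr * (s * K) * E) = sqrt s * X\<close>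
    by (simp add: D2_def E_def c_def mult.assoc)
  have ss: "sqrt s \<le> s"
  proof -
    have s1: "sqrt s \<ge> 1" using assms by simp
    have "sqrt s * 1 \<le> sqrt s * sqrt s" using s1 by (intro mult_left_mono) auto
    then show ?thesis using assms by simp
  qed
  have c0: "c > 0" using assms by (simp add: c_def)
  have D1: "D1 > 0" using X assms c0 by (simp add: D1_def add_nonneg_pos)
  have D2: "D2 > 0" using X assms c0 by (simp add: D2_def add_nonneg_pos)
  have sX: "sqrt s * X \<le> s * X" using ss X by (intro mult_right_mono) auto
  have rs1: "rs \<le> s * rs" using assms by simp
  have DD: "D2 \<le> s * D1" unfolding D1_def D2_def using sX rs1 by (simp add: algebra_simps)
  have eq: "R / D1 = s * R / (s * D1)" using assms by simp
  show "Hf a rr rd rs K R \<le> Hf a rr rd rs (s * K) (s * R)"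
    unfolding H1 H2 eq using DD D1 D2 assms by (intro divide_left_mono) auto
  assume "s > 1"
  then have "rs < s * rs" using assms by simp
  then have "D2 < s * D1" unfolding D1_def D2_def using sX by (simp add: algebra_simps)
  then show "Hf a rr rd rs K R < Hf a rr rd rs (s * K) (s * R)"
    unfolding H1 H2 eq using D1 D2 assms by (intro divide_strict_left_mono) auto
qed


lemma H_deriv_pos:
  assumes "a > 0" "rr > 0" "rd > 0" "rs > 0" "K > 0" "c > 0"
    and pc: "ps (c * ln 2) = (1 + rd / rr) * sqrt (K * rr / a)"
    and R: "0 < R" "R < c * K"
  shows "\<exists>y. DERIV (Hf a rr rd rs K) R :> y \<and> y > 0"
proof -
  define L where "L = ln (2::real)"
  have L: "L > 0" by (simp add: L_def)
  define A where "A = 2 * sqrt (a * rr * K)"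
  define b where "b = K * (rr + rd) + rs"
  have A: "A > 0" using assms by (simp add: A_def)
  have b: "b > K * (rr + rd)" using assms by (simp add: b_def)
  define hh where "hh = (\<lambda>R. R / (A * sqrt (exp (R / K * L) - 1) + b))"
  have Hh: "Hf a rr rd rs K = hh"
  proof
    fix R
    show "Hf a rr rd rs K R = hh R"
      unfolding Hf_exp hh_def A_def L_def b_def
      by (simp add: real_sqrt_mult)
  qed
  define u where "u = R / K * L"
  have u: "u > 0" using R assms L by (simp add: u_def)
  have uc: "u < c * L" using R assms L by (simp add: u_def field_simps)
  define ey where "ey = exp u"
  have ey: "ey > 1" using u by (simp add: ey_def)
  define sE where "sE = sqrt (ey - 1)"
  have sE: "sE > 0" using ey by (simp add: sE_def)
  have sE2: "sE * sE = ey - 1" using ey by (simp add: sE_def)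
  define den where "den = A * sE + b"
  have den: "den > 0"
  proof -
    have "A * sE > 0" using A sE by simp
    moreover have "K * (rr + rd) > 0" using assms by simp
    ultimately show ?thesis using b unfolding den_def by linarith
  qed
  define den' where "den' = A * (ey * (L / K) / (2 * sE))"
  have dd: "((\<lambda>R. A * sqrt (exp (R / K * L) - 1) + b) has_real_derivative den') (at R)"
    unfolding den'_def ey_def sE_def u_def using ey[unfolded ey_def u_def] assms
    by (auto intro!: derivative_eq_intros simp: field_simps)
  have D: "(hh has_real_derivative ((1 * den - R * den') / (den * den))) (at R)"
  proof -
    have "(hh has_real_derivative ((1 * (A * sqrt (exp (R / K * L) - 1) + b) - R * den') / ((A * sqrt (exp (R / K * L) - 1) + b) * (A * sqrt (exp (R / K * L) - 1) + b)))) (at R)"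
      unfolding hh_def
      using DERIV_divide[OF DERIV_ident dd] den unfolding den_def sE_def ey_def u_def by simp
    then show ?thesis unfolding den_def sE_def ey_def u_def .
  qed
  have Rden: "R * den' = A * ey * u / (2 * sE)"
    using assms by (simp add: den'_def u_def field_simps)
  define N where "N = (u - 1) * ey + 1"
  have psu: "ps u = N / sE" by (simp add: ps_def N_def sE_def ey_def)
  have "ps u < ps (c * L)" using ps_mono[OF u uc] .
  then have "N / sE < (1 + rd / rr) * sqrt (K * rr / a)" using psu pc L_def by simp
  then have Nlt: "N < (1 + rd / rr) * sqrt (K * rr / a) * sE" using sE by (simp add: divide_less_eq)
  have At: "A * ((1 + rd / rr) * sqrt (K * rr / a)) = 2 * (K * (rr + rd))"
  proof -
    have "sqrt (a * rr * K) * sqrt (K * rr / a) = sqrt ((K * rr)^2)"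
      using assms by (simp add: real_sqrt_mult[symmetric] power2_eq_square field_simps)
    also have "\<dots> = K * rr" using assms by simp
    finally have "sqrt (a * rr * K) * sqrt (K * rr / a) = K * rr" .
    then show ?thesis unfolding A_def using assms by (simp add: field_simps)
  qed
  have "A * N \<le> A * ((1 + rd / rr) * sqrt (K * rr / a) * sE)" using Nlt A by simp
  also have "\<dots> = 2 * (K * (rr + rd)) * sE" using At by (simp add: mult.assoc[symmetric])
  also have "\<dots> < 2 * b * sE" using b sE by simp
  finally have AN: "A * N < 2 * b * sE" .
  have uey: "u * ey = N + sE * sE" using sE2 by (simp add: N_def algebra_simps)
  have AE: "A * (sE * sE) > 0" using A sE by simp
  have key: "A * ey * u < 2 * sE * den"
  proof -
    have "A * ey * u = A * N + A * (sE * sE)" using uey by (simp add: algebra_simps)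
    also have "\<dots> < 2 * A * (sE * sE) + 2 * b * sE" using AN AE by linarith
    also have "\<dots> = 2 * sE * den" by (simp add: den_def algebra_simps)
    finally show ?thesis .
  qed
  have "R * den' < den" unfolding Rden using key sE by (simp add: divide_less_eq mult.commute)
  then have "(1 * den - R * den') / (den * den) > 0" using den by simp
  then show ?thesis using D Hh by auto
qed

lemma H_mono:
  assumes "a > 0" "rr > 0" "rd > 0" "rs > 0" "K > 0" "c > 0"
    and pc: "ps (c * ln 2) = (1 + rd / rr) * sqrt (K * rr / a)"
    and R: "0 < R1" "R1 < R2" "R2 < c * K"
  shows "Hf a rr rd rs K R1 < Hf a rr rd rs K R2"
proof (rule DERIV_pos_imp_increasing[OF R(2)])
  fix x assume "R1 \<le> x" "x \<le> R2"
  then have "0 < x" "x < c * K" using R by linarith+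
  then show "\<exists>y. DERIV (Hf a rr rd rs K) x :> y \<and> y > 0"
    using H_deriv_pos[OF assms(1-6) pc] by blast
qed


theorem lemma6:
  fixes alpha rho_r rho_d rho_s rho_0 T R1 R2 :: real
  assumes "alpha > 1" and "rho_r > 0" and "rho_d > 0" and "rho_s > 0" and "rho_0 > 0"
    and "T > 1"
    and "Kmax rho_r rho_d rho_0 T > 10"
    and "0 < R1" and "R1 < R2" and "R2 < Rmax alpha rho_r rho_d rho_0 T"
    and "rho_r < alpha / (1 + rho_d / rho_r)^2 * (g R1)^2 / R1"
    and "rho_r < alpha / (1 + rho_d / rho_r)^2 * (g R2)^2 / R2"
  shows "zeta'_csi R1 alpha rho_r rho_d rho_s rho_0 T < zeta'_csi R2 alpha rho_r rho_d rho_s rho_0 T"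
proof -
  define Km where "Km = Kmax rho_r rho_d rho_0 T"
  define c where "c = cTheta alpha rho_r rho_d rho_0 T"
  define H where "H = Hf alpha rho_r rho_d rho_s"
  define S where "S = {(M, K). 1 \<le> K \<and> K \<le> Km \<and> M > (K::real)}"
  have a: "alpha > 0" using assms by simp
  note pos = a assms(2,3,4)
  have Km: "Km > 10" using assms by (simp add: Km_def)
  have cp: "c > 0 \<and> ps (c * ln 2) = (1 + rho_d / rho_r) * sqrt (Km * rho_r / alpha)"
    unfolding c_def Km_def using cTheta_prop[OF a assms(2,3)] assms(7) by simp
  have R2c: "R2 < c * Km" using assms(10) by (simp add: Rmax_def c_def Km_def mult.commute)
  have zdef: "\<And>R. zeta'_csi R alpha rho_r rho_d rho_s rho_0 T =
      (SUP MK \<in> S. zeta_csi (fst MK) (snd MK) R alpha rho_r rho_d rho_s)"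
    by (simp add: zeta'_csi_def S_def Km_def)
  have zle: "\<And>R MK. R > 0 \<Longrightarrow> MK \<in> S \<Longrightarrow> zeta_csi (fst MK) (snd MK) R alpha rho_r rho_d rho_s \<le> H (snd MK) R"
    unfolding H_def S_def using zeta_le_H[OF pos] by auto
  have SnE: "S \<noteq> {}"
  proof -
    have "(2, 1) \<in> S" using Km by (simp add: S_def)
    then show ?thesis by blast
  qed
  have cont: "continuous_on {1..Km} (\<lambda>K. H K R1)"
  proof -
    have "\<And>K. K \<in> {1..Km} \<Longrightarrow> 2 * sqrt (alpha * rho_r * K * (exp (R1 / K * ln 2) - 1)) + K * (rho_r + rho_d) + rho_s \<noteq> 0"
    proof -
      fix K :: real assume K: "K \<in> {1..Km}"
      have "exp (R1 / K * ln 2) \<ge> 1" using K assms by simp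
      then have "sqrt (alpha * rho_r * K * (exp (R1 / K * ln 2) - 1)) \<ge> 0" using K pos by simp
      moreover have "K * (rho_r + rho_d) > 0" using K pos by simp
      ultimately show "2 * sqrt (alpha * rho_r * K * (exp (R1 / K * ln 2) - 1)) + K * (rho_r + rho_d) + rho_s \<noteq> 0"
        using pos by linarith
    qed
    then show ?thesis unfolding H_def Hf_exp
      by (intro continuous_intros) auto
  qed
  obtain K1 where K1: "K1 \<in> {1..Km}" and K1max: "\<And>K. K \<in> {1..Km} \<Longrightarrow> H K R1 \<le> H K1 R1"
    using continuous_attains_sup[OF compact_Icc _ cont] Km by fastforce
  define B where "B = H K1 R1"
  have up1: "zeta'_csi R1 alpha rho_r rho_d rho_s rho_0 T \<le> B"
    unfolding zdef
  proof (rule cSUP_least[OF SnE])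
    fix MK assume MK: "MK \<in> S"
    then have "snd MK \<in> {1..Km}" by (auto simp: S_def)
    then show "zeta_csi (fst MK) (snd MK) R1 alpha rho_r rho_d rho_s \<le> B"
      using zle[OF assms(8) MK] K1max unfolding B_def by (meson order_trans)
  qed
  have K1pos: "K1 \<ge> 1" "K1 \<le> Km" using K1 by auto
  define t where "t = R2 / R1"
  have t: "t > 1" using assms by (simp add: t_def)
  have tR: "t * R1 = R2" using assms by (simp add: t_def)
  have "\<exists>K2. 1 \<le> K2 \<and> K2 \<le> Km \<and> H K2 R2 > B"
  proof (cases "t * K1 \<le> Km")
    case True
    have "H K1 R1 < H (t * K1) (t * R1)"
      unfolding H_def using H_scale(2)[OF pos _ assms(8), of K1 t] t K1pos by simp
    moreover have "1 \<le> t * K1"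
      using mult_mono[of 1 t 1 K1] t K1pos by simp
    ultimately show ?thesis using True tR unfolding B_def
      by (intro exI[of _ "t * K1"]) auto
  next
    case False
    define s where "s = Km / K1"
    have s1: "s \<ge> 1" using K1pos by (simp add: s_def)
    have sK: "s * K1 = Km" using K1pos by (simp add: s_def)
    have st: "s < t" using False K1pos by (simp add: s_def divide_less_eq mult.commute)
    have "H K1 R1 \<le> H (s * K1) (s * R1)"
      unfolding H_def using H_scale(1)[OF pos _ assms(8) s1, of K1] K1pos by simp
    also have "\<dots> = H Km (s * R1)" using sK by simp
    also have "\<dots> < H Km R2"
    proof -
      have "s * R1 < t * R1" using st assms(8) by simp
      then have "s * R1 < R2" using tR by simp
      moreover have "0 < s * R1" using s1 assms(8) by simp
      ultimately show ?thesis unfolding H_def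
        using cp Km R2c by (intro H_mono[OF pos, of Km c]) auto
    qed
    finally show ?thesis unfolding B_def using Km by (intro exI[of _ Km]) auto
  qed
  then obtain K2 where K2: "1 \<le> K2" "K2 \<le> Km" "H K2 R2 > B" by blast
  define M2 where "M2 = K2 + sqrt (alpha * K2 * (2 powr (R2 / K2) - 1) / rho_r)"
  have R2p: "R2 > 0" using assms by simp
  have M2: "M2 > K2" using zeta_eq_H(1)[OF pos K2(1) R2p] by (simp add: M2_def)
  have zM2: "zeta_csi M2 K2 R2 alpha rho_r rho_d rho_s = H K2 R2"
    using zeta_eq_H(2)[OF pos K2(1) R2p] by (simp add: M2_def H_def)
  have inS: "(M2, K2) \<in> S" using K2 M2 by (simp add: S_def)
  have bdd: "bdd_above ((\<lambda>MK. zeta_csi (fst MK) (snd MK) R2 alpha rho_r rho_d rho_s) ` S)"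
  proof (rule bdd_aboveI2)
    fix MK assume MK: "MK \<in> S"
    then have "snd MK \<ge> 1" by (auto simp: S_def)
    then have "H (snd MK) R2 \<le> R2 / rho_s" unfolding H_def using H_le_bound[OF pos _ R2p] by simp
    then show "zeta_csi (fst MK) (snd MK) R2 alpha rho_r rho_d rho_s \<le> R2 / rho_s"
      using zle[OF R2p MK] by linarith
  qed
  have "H K2 R2 \<le> zeta'_csi R2 alpha rho_r rho_d rho_s rho_0 T"
    unfolding zdef using cSUP_upper[OF inS bdd] zM2 by simp
  then show ?thesis using up1 K2(3) by linarith
qed

end
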